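(* Let $G$ be a distribution function on $\mathbb{R}$ with $G(0)=0$ and $G(\epsilon)>0$ for all $\epsilon>0$, and let $C=C(G)$ be the associated delay copula. Then there exists $\sigma\in\mathbb{S}$ with $C^{\mathbb{S},2}(\sigma,\sigma)-C^{\mathbb{S}}(\sigma)^2\neq 0$.
   Context: The delay copula $C(G)$ is the copula of the random vector $(X,X+D)$, where $X$ is uniformly distributed on $[0,1]$, $D$ is independent of $X$ and has distribution function $G$; i.e. $C(G)(u,v)=\mathbb{P}(F_1(X)\le u,F_2(X+D)\le v)$ with $F_1,F_2$ the (continuous) marginal distribution functions. $\mathbb{S}_k$ is the set of permutations of $[k]$, $\mathbb{S}=\bigsqcup_k\mathbb{S}_k$. For points $(u_i,v_i)$, $i\le k$, with no ties in either coordinate, $\Pi_k$ is the unique $\pi\in\mathbb{S}_k$ with $u_i<u_j\iff v_{\pi(i)}<v_{\pi(j)}$. For a copula $C$ and independent $Z_1,Z_2,Z_2',\dots$ with distribution function $C$: $C^{\mathbb{S}}(\sigma)=\mathbb{P}(\Pi_k(Z_1,\dots,Z_k)=\sigma)$ for $\sigma\in\mathbb{S}_k$, and $C^{\mathbb{S},2}(\sigma,\tau)=\mathbb{P}(\Pi_k(Z_1,Z_2,\dots,Z_k)=\sigma,\ \Pi_j(Z_1,Z_2',\dots,Z_j')=\tau)$ for $\sigma\in\mathbb{S}_k,\tau\in\mathbb{S}_j$. *)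

theory Defs
  imports "HOL-Probability.Probability"
begin

text \<open>The law of D is given as a real probability measure with distribution
function G = cdf D.  X is uniform on [0,1], independent of D.\<close>

definition delay_joint :: "real measure \<Rightarrow> (real \<times> real) measure" where
  "delay_joint D = distr (uniform_measure lborel {0..1} \<Otimes>\<^sub>M D) borel (\<lambda>(x, d). (x, x + d))"

definition delay_F1 :: "real measure \<Rightarrow> real \<Rightarrow> real" where
  "delay_F1 D = cdf (distr (delay_joint D) borel fst)"

definition delay_F2 :: "real measure \<Rightarrow> real \<Rightarrow> real" where
  "delay_F2 D = cdf (distr (delay_joint D) borel snd)"

text \<open>The probability measure on the unit square whose distribution function is the
delay copula C(G), i.e. the law of (F1(X), F2(X+D)).\<close>
definition delay_copula_measure :: "real measure \<Rightarrow> (real \<times> real) measure" where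
  "delay_copula_measure D =
     distr (delay_joint D) borel (\<lambda>(x, y). (delay_F1 D x, delay_F2 D y))"

definition delay_copula :: "real measure \<Rightarrow> real \<Rightarrow> real \<Rightarrow> real" where
  "delay_copula D u v = measure (delay_copula_measure D) ({..u} \<times> {..v})"

definition no_ties :: "nat \<Rightarrow> (nat \<Rightarrow> real \<times> real) \<Rightarrow> bool" where
  "no_ties k z \<longleftrightarrow>
     (\<forall>i<k. \<forall>j<k. i \<noteq> j \<longrightarrow> fst (z i) \<noteq> fst (z j) \<and> snd (z i) \<noteq> snd (z j))"

definition perm_pattern :: "nat \<Rightarrow> (nat \<Rightarrow> real \<times> real) \<Rightarrow> (nat \<Rightarrow> nat)" where
  "perm_pattern k z = (THE \<pi>. \<pi> permutes {..<k} \<and>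
     (\<forall>i<k. \<forall>j<k. fst (z i) < fst (z j) \<longleftrightarrow> snd (z (\<pi> i)) < snd (z (\<pi> j))))"

text \<open>C^S(\<sigma>) for \<sigma> in S_k: Z_0..Z_(k-1) iid with law C.\<close>
definition copula_perm_prob :: "(real \<times> real) measure \<Rightarrow> nat \<Rightarrow> (nat \<Rightarrow> nat) \<Rightarrow> real" where
  "copula_perm_prob C k \<sigma> =
     measure (PiM {..<k} (\<lambda>_. C))
       {z \<in> space (PiM {..<k} (\<lambda>_. C)). no_ties k z \<and> perm_pattern k z = \<sigma>}"

text \<open>C^{S,2}(\<sigma>,\<tau>) for \<sigma> in S_k, \<tau> in S_j: the second family z' shares its first
point with the first family (z' 0 is replaced by z 0), all other points independent.\<close>
definition copula_perm_prob2 ::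
  "(real \<times> real) measure \<Rightarrow> nat \<Rightarrow> (nat \<Rightarrow> nat) \<Rightarrow> nat \<Rightarrow> (nat \<Rightarrow> nat) \<Rightarrow> real" where
  "copula_perm_prob2 C k \<sigma> j \<tau> =
     measure (PiM {..<k} (\<lambda>_. C) \<Otimes>\<^sub>M PiM {..<j} (\<lambda>_. C))
       {p \<in> space (PiM {..<k} (\<lambda>_. C) \<Otimes>\<^sub>M PiM {..<j} (\<lambda>_. C)).
          no_ties k (fst p) \<and> perm_pattern k (fst p) = \<sigma> \<and>
          no_ties j ((snd p)(0 := fst p 0)) \<and> perm_pattern j ((snd p)(0 := fst p 0)) = \<tau>}"

end

theory Submission
  imports Defs
begin

definition disc :: "real \<times> real \<Rightarrow> real \<times> real \<Rightarrow> bool" where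
  "disc a b \<longleftrightarrow> (fst a < fst b \<and> snd b < snd a) \<or> (fst b < fst a \<and> snd a < snd b)"

lemma perms2: assumes "\<pi> permutes {..<(2::nat)}" shows "\<pi> = id \<or> \<pi> = Transposition.transpose 0 1"
proof -
  have a: "\<pi> 0 \<in> {..<2}" "\<pi> 1 \<in> {..<2}" using assms permutes_in_image by fastforce+
  have b: "\<pi> 0 \<noteq> \<pi> 1" using permutes_inj[OF assms] by (metis injD zero_neq_one)
  have c: "\<And>i. i \<ge> 2 \<Longrightarrow> \<pi> i = i" using permutes_not_in[OF assms] by auto
  show ?thesis
  proof (cases "\<pi> 0 = 0")
    case True
    then have "\<pi> 1 = 1" using a b by auto
    then have "\<pi> = id"
    proof (intro ext)
      fix i :: nat
      show "\<pi> i = id i"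
      proof (cases "i < 2")
        case True then have "i = 0 \<or> i = 1" by auto
        then show ?thesis using \<open>\<pi> 0 = 0\<close> \<open>\<pi> 1 = 1\<close> by auto
      next
        case False then show ?thesis using c[of i] by auto
      qed
    qed
    then show ?thesis ..
  next
    case False
    then have "\<pi> 0 = 1" "\<pi> 1 = 0" using a b by auto
    then have "\<pi> = Transposition.transpose 0 1"
    proof (intro ext)
      fix i :: nat
      show "\<pi> i = Transposition.transpose 0 1 i"
      proof (cases "i < 2")
        case True then have "i = 0 \<or> i = 1" by auto
        then show ?thesis using \<open>\<pi> 0 = 1\<close> \<open>\<pi> 1 = 0\<close> by (auto simp: transpose_def)
      next
        case False then show ?thesis using c[of i] by (auto simp: transpose_def)
      qed
    qed
    then show ?thesis ..
  qed
qed

lemma sw_permutes: "Transposition.transpose (0::nat) 1 permutes {..<2}"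
  by (rule permutes_swap_id) auto

definition PP :: "nat \<Rightarrow> (nat \<Rightarrow> real \<times> real) \<Rightarrow> (nat \<Rightarrow> nat) \<Rightarrow> bool" where
  "PP k z \<pi> \<longleftrightarrow> \<pi> permutes {..<k} \<and>
     (\<forall>i<k. \<forall>j<k. fst (z i) < fst (z j) \<longleftrightarrow> snd (z (\<pi> i)) < snd (z (\<pi> j)))"

lemma pattern2:
  "(no_ties 2 z \<and> perm_pattern 2 z = Transposition.transpose 0 1) \<longleftrightarrow> disc (z 0) (z 1)"
proof -
  let ?s = "Transposition.transpose (0::nat) 1"
  have all2: "(\<forall>i<(2::nat). Q i) \<longleftrightarrow> Q 0 \<and> Q 1" for Q by (auto simp: less_2_cases_iff)
  have nt: "no_ties 2 z \<longleftrightarrow> fst (z 0) \<noteq> fst (z 1) \<and> snd (z 0) \<noteq> snd (z 1)"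
    unfolding no_ties_def all2 by auto
  have Pid: "PP 2 z id \<longleftrightarrow> (fst (z 0) < fst (z 1) \<longleftrightarrow> snd (z 0) < snd (z 1)) \<and> (fst (z 1) < fst (z 0) \<longleftrightarrow> snd (z 1) < snd (z 0))"
    unfolding PP_def all2 by (auto simp: permutes_id)
  have Ps: "PP 2 z ?s \<longleftrightarrow> (fst (z 0) < fst (z 1) \<longleftrightarrow> snd (z 1) < snd (z 0)) \<and> (fst (z 1) < fst (z 0) \<longleftrightarrow> snd (z 0) < snd (z 1))"
    unfolding PP_def all2 using sw_permutes by (auto simp: transpose_def)
  have pp: "perm_pattern 2 z = (THE \<pi>. PP 2 z \<pi>)" unfolding perm_pattern_def PP_def ..
  have P2: "PP 2 z \<pi> \<Longrightarrow> \<pi> = id \<or> \<pi> = ?s" for \<pi> using perms2[of \<pi>] unfolding PP_def by simp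
  show ?thesis
  proof
    assume H: "no_ties 2 z \<and> perm_pattern 2 z = ?s"
    have "PP 2 z id \<or> PP 2 z ?s" unfolding Pid Ps using H nt by auto
    then obtain \<pi>0 where p0: "PP 2 z \<pi>0" by blast
    have "\<not> (PP 2 z id \<and> PP 2 z ?s)" using H nt Pid Ps by auto
    then have uq: "PP 2 z \<pi> \<Longrightarrow> \<pi> = \<pi>0" for \<pi> using P2[of \<pi>] P2[of \<pi>0] p0 by blast
    have "PP 2 z (THE \<pi>. PP 2 z \<pi>)" by (rule theI[of "PP 2 z" \<pi>0, OF p0]) (rule uq)
    then have "PP 2 z ?s" using H pp by simp
    then show "disc (z 0) (z 1)" using H nt unfolding Ps disc_def by auto
  next
    assume d: "disc (z 0) (z 1)"
    then have n: "no_ties 2 z" unfolding nt disc_def by auto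
    have Pss: "PP 2 z ?s" using d unfolding Ps disc_def by auto
    have "\<not> PP 2 z id" using d unfolding Pid disc_def by auto
    then have u2: "PP 2 z \<pi> \<Longrightarrow> \<pi> = ?s" for \<pi> using P2[of \<pi>] by blast
    have "(THE \<pi>. PP 2 z \<pi>) = ?s" by (rule the_equality[of "PP 2 z", OF Pss]) (rule u2)
    then show "no_ties 2 z \<and> perm_pattern 2 z = ?s" using n pp by simp
  qed
qed

lemma pred_disc[measurable (raw)]:
  "f \<in> M \<rightarrow>\<^sub>M borel \<Longrightarrow> g \<in> M \<rightarrow>\<^sub>M borel \<Longrightarrow> Measurable.pred M (\<lambda>x. disc (f x) (g x))"
proof -
  assume a: "f \<in> M \<rightarrow>\<^sub>M borel" "g \<in> M \<rightarrow>\<^sub>M borel"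
  have [measurable]: "f \<in> M \<rightarrow>\<^sub>M borel \<Otimes>\<^sub>M borel" "g \<in> M \<rightarrow>\<^sub>M borel \<Otimes>\<^sub>M borel"
    using a by (simp_all add: borel_prod)
  show ?thesis unfolding disc_def by measurable
qed

lemma all2b: "(\<forall>i\<in>{..<2::nat}. Q i) \<longleftrightarrow> Q 0 \<and> Q 1"
  by (auto simp: less_2_cases_iff)

definition hC :: "(real \<times> real) measure \<Rightarrow> real \<times> real \<Rightarrow> real" where
  "hC C a = measure C {b. disc a b}"

context
  fixes C :: "(real \<times> real) measure"
  assumes C: "prob_space C" and sC: "sets C = sets borel"
begin

lemma spC: "space C = UNIV" using sets_eq_imp_space_eq[OF sC] by simp

lemma measC: "measurable M C = measurable M borel" by (rule measurable_cong_sets[OF refl sC])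

lemma setsCC: "sets (C \<Otimes>\<^sub>M C) = sets borel"
  using sets_pair_measure_cong[OF sC sC] borel_prod by metis

lemma measCC: "measurable (C \<Otimes>\<^sub>M C) M = measurable borel M" by (rule measurable_cong_sets[OF setsCC refl])

lemma f_meas: "(\<lambda>z. (z 0, z 1)) \<in> PiM {..<2::nat} (\<lambda>_. C) \<rightarrow>\<^sub>M C \<Otimes>\<^sub>M C"
  by measurable

lemma L1: "distr (PiM {..<2::nat} (\<lambda>_. C)) (C \<Otimes>\<^sub>M C) (\<lambda>z. (z 0, z 1)) = C \<Otimes>\<^sub>M C"
proof -
  interpret C: prob_space C by (rule C)
  interpret product_sigma_finite "\<lambda>_::nat. C"
    using C.sigma_finite_measure_axioms by (simp add: product_sigma_finite_def)
  have "C \<Otimes>\<^sub>M C = distr (PiM {..<2::nat} (\<lambda>_. C)) (C \<Otimes>\<^sub>M C) (\<lambda>z. (z 0, z 1))"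
  proof (rule pair_measure_eqI)
    show "sigma_finite_measure C" by (rule C.sigma_finite_measure_axioms)
    show "sigma_finite_measure C" by (rule C.sigma_finite_measure_axioms)
    show "sets (C \<Otimes>\<^sub>M C) = sets (distr (PiM {..<2::nat} (\<lambda>_. C)) (C \<Otimes>\<^sub>M C) (\<lambda>z. (z 0, z 1)))"
      by simp
  next
    fix A B assume A: "A \<in> sets C" and B: "B \<in> sets C"
    let ?F = "\<lambda>i::nat. if i = 0 then A else B"
    have eq: "(\<lambda>z. (z 0, z 1)) -` (A \<times> B) \<inter> space (PiM {..<2::nat} (\<lambda>_. C)) = PiE {..<2} ?F"
    proof (intro set_eqI iffI)
      fix z assume "z \<in> (\<lambda>z. (z 0, z 1)) -` (A \<times> B) \<inter> space (PiM {..<2::nat} (\<lambda>_. C))"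
      then have z: "z \<in> extensional {..<2}" "z 0 \<in> A" "z 1 \<in> B" by (auto simp: space_PiM PiE_def)
      show "z \<in> PiE {..<2} ?F" unfolding PiE_def Pi_def using z by (auto simp: less_2_cases_iff)
    next
      fix z assume z: "z \<in> PiE {..<2} ?F"
      have "z 0 \<in> A" using PiE_mem[OF z, of 0] by simp
      moreover have "z 1 \<in> B" using PiE_mem[OF z, of 1] by simp
      moreover have "z \<in> extensional {..<2}" using z by (simp add: PiE_def)
      ultimately show "z \<in> (\<lambda>z. (z 0, z 1)) -` (A \<times> B) \<inter> space (PiM {..<2::nat} (\<lambda>_. C))"
        by (simp add: space_PiM spC PiE_def)
    qed
    have "emeasure (distr (PiM {..<2::nat} (\<lambda>_. C)) (C \<Otimes>\<^sub>M C) (\<lambda>z. (z 0, z 1))) (A \<times> B)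
        = emeasure (PiM {..<2::nat} (\<lambda>_. C)) ((\<lambda>z. (z 0, z 1)) -` (A \<times> B) \<inter> space (PiM {..<2::nat} (\<lambda>_. C)))"
      using A B by (intro emeasure_distr[OF f_meas]) auto
    also have "\<dots> = emeasure (PiM {..<2::nat} (\<lambda>_. C)) (PiE {..<2} ?F)"
      unfolding eq ..
    also have "\<dots> = (\<Prod>i\<in>{..<2}. emeasure C (?F i))"
      using A B by (intro emeasure_PiM) auto
    also have "\<dots> = emeasure C B * emeasure C A"
      by (simp add: lessThan_Suc numeral_2_eq_2)
    finally show "emeasure C A * emeasure C B = emeasure (distr (PiM {..<2::nat} (\<lambda>_. C)) (C \<Otimes>\<^sub>M C) (\<lambda>z. (z 0, z 1))) (A \<times> B)"
      by (simp add: mult.commute)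
  qed
  then show ?thesis by simp
qed


lemma Delta_sets: "{p. disc (fst p) (snd p)} \<in> sets (C \<Otimes>\<^sub>M C)"
proof -
  have "{p \<in> space (borel \<Otimes>\<^sub>M borel). disc (fst p) (snd p)} \<in> sets (borel \<Otimes>\<^sub>M borel :: ((real \<times> real) \<times> (real \<times> real)) measure)"
    by measurable
  then show ?thesis by (simp add: sets_pair_measure_cong[OF sC sC] space_pair_measure)
qed

lemma Pair_Delta: "Pair a -` {p. disc (fst p) (snd p)} = {b. disc a b}" by auto

lemma h_meas[measurable]: "hC C \<in> borel_measurable C"
proof -
  interpret C: prob_space C by (rule C)
  have "hC C = (\<lambda>a. enn2real (emeasure C (Pair a -` {p. disc (fst p) (snd p)})))"
    by (rule ext) (simp add: hC_def measure_def)
  also have "\<dots> \<in> borel_measurable C"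
    by (intro borel_measurable_enn2real C.measurable_emeasure_Pair Delta_sets)
  finally show ?thesis .
qed

lemma disc_sets: "{b. disc a b} \<in> sets C"
proof -
  have "{b \<in> space borel. disc a b} \<in> sets borel" by measurable
  then show ?thesis by (simp add: sC)
qed

lemma h_bounds: "0 \<le> hC C a" "hC C a \<le> 1"
proof -
  interpret C: prob_space C by (rule C)
  show "0 \<le> hC C a" "hC C a \<le> 1" by (simp_all add: hC_def)
qed

lemma emeas_h: "emeasure C {b. disc a b} = ennreal (hC C a)"
proof -
  interpret C: prob_space C by (rule C)
  show ?thesis by (simp add: hC_def C.emeasure_eq_measure)
qed

lemma P1: "copula_perm_prob C 2 (Transposition.transpose 0 1) = (\<integral>a. hC C a \<partial>C)"
proof -
  interpret C: prob_space C by (rule C)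
  let ?P = "PiM {..<2::nat} (\<lambda>_. C)"
  let ?f = "\<lambda>z::nat \<Rightarrow> real \<times> real. (z 0, z 1)"
  let ?D = "{p. disc (fst p) (snd p)}"
  have set: "{z \<in> space ?P. no_ties 2 z \<and> perm_pattern 2 z = Transposition.transpose 0 1} = ?f -` ?D \<inter> space ?P"
    using pattern2 by auto
  have "copula_perm_prob C 2 (Transposition.transpose 0 1) = measure ?P (?f -` ?D \<inter> space ?P)"
    unfolding copula_perm_prob_def set ..
  also have "\<dots> = measure (distr ?P (C \<Otimes>\<^sub>M C) ?f) ?D"
    by (rule measure_distr[symmetric, OF f_meas Delta_sets])
  also have "\<dots> = measure (C \<Otimes>\<^sub>M C) ?D" by (simp only: L1)
  also have "\<dots> = enn2real (\<integral>\<^sup>+a. emeasure C (Pair a -` ?D) \<partial>C)"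
    by (simp add: measure_def C.emeasure_pair_measure_alt[OF Delta_sets])
  also have "\<dots> = (\<integral>a. hC C a \<partial>C)"
    by (rule enn2real_nn_integral_eq_integral) (auto simp: Pair_Delta emeas_h h_bounds)
  finally show ?thesis .
qed

lemma comp0[measurable]: "(\<lambda>z. z 0) \<in> PiM {..<2::nat} (\<lambda>_. C) \<rightarrow>\<^sub>M borel"
  unfolding measC[symmetric] by measurable
lemma comp1[measurable]: "(\<lambda>z. z 1) \<in> PiM {..<2::nat} (\<lambda>_. C) \<rightarrow>\<^sub>M borel"
  unfolding measC[symmetric] by measurable

lemma marg1: assumes B: "B \<in> sets C"
  shows "emeasure (PiM {..<2::nat} (\<lambda>_. C)) {w \<in> space (PiM {..<2::nat} (\<lambda>_. C)). w 1 \<in> B} = emeasure C B"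
proof -
  interpret C: prob_space C by (rule C)
  let ?P = "PiM {..<2::nat} (\<lambda>_. C)"
  let ?f = "\<lambda>z::nat \<Rightarrow> real \<times> real. (z 0, z 1)"
  have eq: "{w \<in> space ?P. w 1 \<in> B} = ?f -` (UNIV \<times> B) \<inter> space ?P" by auto
  have UB0: "space C \<times> B \<in> sets (C \<Otimes>\<^sub>M C)" by (rule pair_measureI[OF sets.top B])
  then have UB: "UNIV \<times> B \<in> sets (C \<Otimes>\<^sub>M C)" by (simp add: spC)
  have "emeasure ?P {w \<in> space ?P. w 1 \<in> B} = emeasure ?P (?f -` (UNIV \<times> B) \<inter> space ?P)"
    by (simp only: eq)
  also have "\<dots> = emeasure (distr ?P (C \<Otimes>\<^sub>M C) ?f) (UNIV \<times> B)"
    by (rule emeasure_distr[symmetric, OF f_meas UB])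
  also have "\<dots> = emeasure (C \<Otimes>\<^sub>M C) (space C \<times> B)" by (simp only: L1 spC)
  also have "\<dots> = emeasure C (space C) * emeasure C B"
    using B by (intro C.emeasure_pair_measure_Times) auto
  finally show ?thesis by (simp add: C.emeasure_space_1)
qed

lemma P2: "copula_perm_prob2 C 2 (Transposition.transpose 0 1) 2 (Transposition.transpose 0 1) = (\<integral>a. (hC C a)\<^sup>2 \<partial>C)"
proof -
  interpret C: prob_space C by (rule C)
  let ?P = "PiM {..<2::nat} (\<lambda>_. C)"
  interpret P: prob_space ?P by (rule prob_space_PiM) (rule C)
  let ?f = "\<lambda>z::nat \<Rightarrow> real \<times> real. (z 0, z 1)"
  let ?D = "{p. disc (fst p) (snd p)}"
  let ?S = "{p \<in> space (?P \<Otimes>\<^sub>M ?P). disc (fst p 0) (fst p 1) \<and> disc (fst p 0) (snd p 1)}"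
  let ?G = "\<lambda>q. indicator ?D q * ennreal (hC C (fst q))"
  have set: "{p \<in> space (?P \<Otimes>\<^sub>M ?P).
          no_ties 2 (fst p) \<and> perm_pattern 2 (fst p) = Transposition.transpose 0 1 \<and>
          no_ties 2 ((snd p)(0 := fst p 0)) \<and> perm_pattern 2 ((snd p)(0 := fst p 0)) = Transposition.transpose 0 1} = ?S"
    (is "?L = _")
  proof -
    have "\<And>p. (no_ties 2 (fst p) \<and> perm_pattern 2 (fst p) = Transposition.transpose 0 1 \<and>
          no_ties 2 ((snd p)(0 := fst p 0)) \<and> perm_pattern 2 ((snd p)(0 := fst p 0)) = Transposition.transpose 0 1)
          \<longleftrightarrow> disc (fst p 0) (fst p 1) \<and> disc (fst p 0) (snd p 1)"
    proof -
      fix p :: "(nat \<Rightarrow> real \<times> real) \<times> (nat \<Rightarrow> real \<times> real)"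
      have a: "(no_ties 2 (fst p) \<and> perm_pattern 2 (fst p) = Transposition.transpose 0 1) \<longleftrightarrow> disc (fst p 0) (fst p 1)"
        by (rule pattern2)
      have b: "(no_ties 2 ((snd p)(0 := fst p 0)) \<and> perm_pattern 2 ((snd p)(0 := fst p 0)) = Transposition.transpose 0 1)
         \<longleftrightarrow> disc (fst p 0) (snd p 1)"
        using pattern2[of "(snd p)(0 := fst p 0)"] by simp
      show "?thesis p" using a b by blast
    qed
    then show ?thesis by blast
  qed
  have Ss: "?S \<in> sets (?P \<Otimes>\<^sub>M ?P)" by measurable
  have sec: "emeasure ?P (Pair z -` ?S) = ?G (?f z)" if z: "z \<in> space ?P" for z
  proof (cases "disc (z 0) (z 1)")
    case True
    then have eqS: "Pair z -` ?S = {w \<in> space ?P. w 1 \<in> {b. disc (z 0) b}}"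
      using z by (auto simp: space_pair_measure)
    have "emeasure ?P (Pair z -` ?S) = emeasure C {b. disc (z 0) b}"
      unfolding eqS by (rule marg1[OF disc_sets])
    then show ?thesis using True by (simp add: emeas_h)
  next
    case False
    then have "Pair z -` ?S = {}" by auto
    then show ?thesis using False by simp
  qed
  have Gm: "?G \<in> borel_measurable (C \<Otimes>\<^sub>M C)"
    using Delta_sets by measurable
  have "emeasure (?P \<Otimes>\<^sub>M ?P) ?S = (\<integral>\<^sup>+z. emeasure ?P (Pair z -` ?S) \<partial>?P)"
    by (rule P.emeasure_pair_measure_alt[OF Ss])
  also have "\<dots> = (\<integral>\<^sup>+z. ?G (?f z) \<partial>?P)"
    by (intro nn_integral_cong sec)
  also have "\<dots> = (\<integral>\<^sup>+q. ?G q \<partial>distr ?P (C \<Otimes>\<^sub>M C) ?f)"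
    by (rule nn_integral_distr[symmetric, OF f_meas]) (simp add: Gm)
  also have "\<dots> = (\<integral>\<^sup>+q. ?G q \<partial>(C \<Otimes>\<^sub>M C))" by (simp only: L1)
  also have "\<dots> = (\<integral>\<^sup>+a. \<integral>\<^sup>+b. ?G (a, b) \<partial>C \<partial>C)"
    by (rule C.nn_integral_fst[symmetric, OF Gm])
  also have "\<dots> = (\<integral>\<^sup>+a. ennreal ((hC C a)\<^sup>2) \<partial>C)"
  proof (rule nn_integral_cong)
    fix a
    have "(\<integral>\<^sup>+b. ?G (a, b) \<partial>C) = (\<integral>\<^sup>+b. ennreal (hC C a) * indicator {b. disc a b} b \<partial>C)"
      by (rule nn_integral_cong) (auto simp: indicator_def)
    also have "\<dots> = ennreal (hC C a) * emeasure C {b. disc a b}"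
      by (rule nn_integral_cmult_indicator[OF disc_sets])
    also have "\<dots> = ennreal ((hC C a)\<^sup>2)"
      by (simp add: emeas_h power2_eq_square ennreal_mult h_bounds)
    finally show "(\<integral>\<^sup>+b. ?G (a, b) \<partial>C) = ennreal ((hC C a)\<^sup>2)" .
  qed
  finally have E: "emeasure (?P \<Otimes>\<^sub>M ?P) ?S = (\<integral>\<^sup>+a. ennreal ((hC C a)\<^sup>2) \<partial>C)" .
  have "copula_perm_prob2 C 2 (Transposition.transpose 0 1) 2 (Transposition.transpose 0 1) = measure (?P \<Otimes>\<^sub>M ?P) ?S"
    unfolding copula_perm_prob2_def set ..
  also have "\<dots> = enn2real (\<integral>\<^sup>+a. ennreal ((hC C a)\<^sup>2) \<partial>C)" unfolding measure_def E ..
  also have "\<dots> = (\<integral>a. (hC C a)\<^sup>2 \<partial>C)"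
    by (rule enn2real_nn_integral_eq_integral) auto
  finally show ?thesis .
qed

end

abbreviation UU :: "real measure" where "UU \<equiv> uniform_measure lborel {0..1::real}"

lemma UU_prob: "prob_space UU" by (intro prob_space_uniform_measure) auto

lemma sets_UU: "sets UU = sets borel" by simp
lemma space_UU[simp]: "space UU = UNIV" by simp

lemma ennreal_div1: "(x::ennreal) / 1 = x" by (simp add: divide_ennreal_def)

lemma UU_Iic: "measure UU {..t} = max 0 (min t 1)"
proof -
  have e: "{..t} \<inter> {0..1} = {0..min t 1}" by auto
  have "emeasure UU {..t} = emeasure lborel {0..min t 1}" by (simp add: ennreal_div1 min.commute)
  also have "\<dots> = ennreal (max 0 (min t 1))" by (simp add: emeasure_lborel_Icc_eq max_def)
  finally have E: "emeasure UU {..t} = ennreal (max 0 (min t 1))" .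
  show ?thesis unfolding measure_def E by (rule enn2real_ennreal) simp
qed

lemma UU_Ioc: "0 \<le> x \<Longrightarrow> x \<le> y \<Longrightarrow> y \<le> 1 \<Longrightarrow> measure UU {x<..y} = y - x"
proof -
  assume a: "0 \<le> x" "x \<le> y" "y \<le> 1"
  have e: "{x<..y} \<inter> {0..1} = {x<..y}" using a by auto
  have "emeasure UU {x<..y} = emeasure lborel {x<..y}" using e by (simp add: ennreal_div1 Int_commute)
  also have "\<dots> = ennreal (y - x)" using a by simp
  finally show ?thesis using a by (simp add: measure_def)
qed

lemma fst_meas: "fst \<in> (borel :: (real \<times> real) measure) \<rightarrow>\<^sub>M borel"
  by (subst borel_prod[symmetric]) (rule measurable_fst)

lemma phi_meas: "(\<lambda>(x::real, d::real). (x, x + d)) \<in> borel \<rightarrow>\<^sub>M borel"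
proof -
  have "(\<lambda>(x::real, d::real). (x, x + d)) \<in> borel \<Otimes>\<^sub>M borel \<rightarrow>\<^sub>M borel \<Otimes>\<^sub>M borel" by measurable
  then show ?thesis by (simp add: borel_prod)
qed

lemma psi_meas: "mono f1 \<Longrightarrow> mono f2 \<Longrightarrow> (\<lambda>(x::real, y::real). (f1 x :: real, f2 y :: real)) \<in> borel \<rightarrow>\<^sub>M borel"
proof -
  assume m: "mono f1" "mono f2"
  note [measurable] = borel_measurable_mono[OF m(1)] borel_measurable_mono[OF m(2)]
  have "(\<lambda>(x::real, y::real). (f1 x, f2 y)) \<in> borel \<Otimes>\<^sub>M borel \<rightarrow>\<^sub>M borel \<Otimes>\<^sub>M borel" by measurable
  then show ?thesis by (simp add: borel_prod)
qed

locale dsetup = real_distribution D for D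
begin

abbreviation "M0 \<equiv> UU \<Otimes>\<^sub>M D"

lemma M0_prob: "prob_space M0" by (intro prob_space_pair UU_prob prob_space_axioms)

lemma sets_M0: "sets M0 = sets borel"
  using sets_pair_measure_cong[OF sets_UU events_eq_borel] borel_prod by metis

lemma space_M0[simp]: "space M0 = UNIV" using sets_eq_imp_space_eq[OF sets_M0] by simp

lemma measM0: "measurable M0 N = measurable borel N" by (rule measurable_cong_sets[OF sets_M0 refl])

lemma rect: assumes "A \<in> sets borel" "B \<in> sets borel"
  shows "measure M0 (A \<times> B) = measure UU A * measure D B"
proof -
  have "emeasure M0 (A \<times> B) = emeasure UU A * emeasure D B"
    using assms by (intro emeasure_pair_measure_Times) auto
  then show ?thesis by (simp add: measure_def enn2real_mult)
qed

lemma rect1: "A \<in> sets borel \<Longrightarrow> measure M0 (A \<times> UNIV) = measure UU A"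
  using rect[of A UNIV] by (simp add: prob_space[symmetric])

lemma rect2: "B \<in> sets borel \<Longrightarrow> measure M0 (UNIV \<times> B) = measure D B"
  using rect[of UNIV B] prob_space.prob_space[OF UU_prob] by simp

lemma joint_eq: "delay_joint D = distr M0 borel (\<lambda>(x, d). (x, x + d))"
  unfolding delay_joint_def ..

lemma F1_eq: "delay_F1 D x = measure UU {..x}"
proof -
  have "distr (delay_joint D) borel fst = distr M0 borel (fst \<circ> (\<lambda>(x, d). (x, x + d)))"
    unfolding joint_eq by (rule distr_distr[OF fst_meas]) (simp add: measM0 phi_meas)
  also have "fst \<circ> (\<lambda>(x::real, d::real). (x, x + d)) = fst" by auto
  finally have e: "distr (delay_joint D) borel fst = distr M0 borel fst" .
  have fm: "fst \<in> M0 \<rightarrow>\<^sub>M borel" by (simp add: measM0 fst_meas)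
  have "delay_F1 D x = measure (distr M0 borel fst) {..x}"
    unfolding delay_F1_def cdf_def e ..
  also have "\<dots> = measure M0 (fst -` {..x} \<inter> space M0)"
    by (rule measure_distr[OF fm]) simp
  also have "fst -` {..x} \<inter> space M0 = {..x} \<times> UNIV" by auto
  finally show ?thesis by (simp add: rect1)
qed

lemma F2_eq: "delay_F2 D y = measure M0 {p. fst p + snd p \<le> y}"
proof -
  have "distr (delay_joint D) borel snd = distr M0 borel (snd \<circ> (\<lambda>(x, d). (x, x + d)))"
  proof (unfold joint_eq, rule distr_distr)
    show "snd \<in> (borel :: (real \<times> real) measure) \<rightarrow>\<^sub>M borel"
      by (subst borel_prod[symmetric]) (rule measurable_snd)
  qed (simp add: measM0 phi_meas)
  also have "snd \<circ> (\<lambda>(x::real, d::real). (x, x + d)) = (\<lambda>p. fst p + snd p)" by auto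
  finally have e: "distr (delay_joint D) borel snd = distr M0 borel (\<lambda>p. fst p + snd p)" .
  have fm: "(\<lambda>p. fst p + snd p) \<in> M0 \<rightarrow>\<^sub>M borel" by measurable
  have "delay_F2 D y = measure (distr M0 borel (\<lambda>p. fst p + snd p)) {..y}"
    unfolding delay_F2_def cdf_def e ..
  also have "\<dots> = measure M0 ((\<lambda>p. fst p + snd p) -` {..y} \<inter> space M0)"
    by (rule measure_distr[OF fm]) simp
  also have "(\<lambda>p. fst p + snd p) -` {..y} \<inter> space M0 = {p. fst p + snd p \<le> y}" by auto
  finally show ?thesis .
qed

lemma F1_mono: "mono (delay_F1 D)"
  unfolding mono_def F1_eq UU_Iic by auto

lemma F2_mono: "mono (delay_F2 D)"
proof (rule monoI)
  interpret P: prob_space M0 by (rule M0_prob)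
  fix x y :: real assume "x \<le> y"
  then have "{p. fst p + snd p \<le> x} \<subseteq> {p. fst p + snd p \<le> y}" by auto
  moreover have "{p. fst p + snd p \<le> y} \<in> sets M0"
  proof -
    have "{p \<in> space M0. fst p + snd p \<le> y} \<in> sets M0" by measurable
    then show ?thesis by simp
  qed
  ultimately show "delay_F2 D x \<le> delay_F2 D y"
    unfolding F2_eq by (rule P.finite_measure_mono)
qed

definition gg :: "real \<times> real \<Rightarrow> real \<times> real" where
  "gg p = (delay_F1 D (fst p), delay_F2 D (fst p + snd p))"

lemma gg_meas[measurable]: "gg \<in> M0 \<rightarrow>\<^sub>M borel"
proof -
  have "(\<lambda>(x, y). (delay_F1 D x, delay_F2 D y)) \<circ> (\<lambda>(x::real, d::real). (x, x + d)) \<in> borel \<rightarrow>\<^sub>M borel"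
    by (rule measurable_comp[OF phi_meas psi_meas[OF F1_mono F2_mono]])
  moreover have "(\<lambda>(x, y). (delay_F1 D x, delay_F2 D y)) \<circ> (\<lambda>(x::real, d::real). (x, x + d)) = gg"
    by (auto simp: gg_def)
  ultimately show ?thesis by (simp add: measM0)
qed

lemma C_eq: "delay_copula_measure D = distr M0 borel gg"
proof -
  have "delay_copula_measure D = distr M0 borel ((\<lambda>(x, y). (delay_F1 D x, delay_F2 D y)) \<circ> (\<lambda>(x, d). (x, x + d)))"
    unfolding delay_copula_measure_def joint_eq
    by (rule distr_distr[OF psi_meas[OF F1_mono F2_mono]]) (simp add: measM0 phi_meas)
  also have "(\<lambda>(x, y). (delay_F1 D x, delay_F2 D y)) \<circ> (\<lambda>(x::real, d::real). (x, x + d)) = gg"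
    by (auto simp: gg_def)
  finally show ?thesis .
qed

lemma C_prob: "prob_space (delay_copula_measure D)"
  unfolding C_eq by (intro prob_space.prob_space_distr[OF M0_prob] gg_meas)

lemma sets_C: "sets (delay_copula_measure D) = sets borel"
  unfolding C_eq by simp

lemma hg: "hC (delay_copula_measure D) a = measure M0 {q. disc a (gg q)}"
proof -
  have s: "{b. disc a b} \<in> sets borel"
  proof -
    have "{b \<in> space borel. disc a b} \<in> sets borel" by measurable
    then show ?thesis by simp
  qed
  have "hC (delay_copula_measure D) a = measure M0 (gg -` {b. disc a b} \<inter> space M0)"
    unfolding hC_def C_eq by (rule measure_distr[OF gg_meas s])
  also have "gg -` {b. disc a b} \<inter> space M0 = {q. disc a (gg q)}" by auto
  finally show ?thesis .
qed

end

lemma AE_pos_witness: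
  assumes "AE x in M. P x" "A \<in> sets M" "measure M A > 0"
  shows "\<exists>x\<in>A. P x"
proof (rule ccontr)
  assume "\<not> (\<exists>x\<in>A. P x)"
  then have "AE x in M. \<not> (x \<in> A)" using assms(1) by (auto elim: AE_mp)
  then have "emeasure M {x \<in> space M. x \<in> A} = 0" by (rule emeasure_eq_0_AE)
  moreover have "{x \<in> space M. x \<in> A} = A" using sets.sets_into_space[OF assms(2)] by auto
  ultimately have "measure M A = 0" by (simp add: measure_def)
  then show False using assms(3) by simp
qed

locale dsetup2 = dsetup +
  assumes D0: "cdf D 0 = 0" and Dpos: "\<forall>\<epsilon>>0. cdf D \<epsilon> > 0"
begin

lemma F1_val: "0 \<le> x \<Longrightarrow> x \<le> 1 \<Longrightarrow> delay_F1 D x = x"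
  by (simp add: F1_eq UU_Iic)

lemma disc_set_M0: "{q. disc a (gg q)} \<in> sets M0"
proof -
  have "{q \<in> space M0. disc a (gg q)} \<in> sets M0" by measurable
  then show ?thesis by simp
qed

lemma borel_Iic: "{..t::real} \<in> sets borel" by simp

lemma lemA:
  assumes d: "0 < \<delta>" "\<delta> \<le> 1/4"
  shows "\<exists>A0 \<in> sets M0. measure M0 A0 > 0 \<and> (\<forall>p\<in>A0. hC (delay_copula_measure D) (gg p) \<le> 3 * \<delta>)"
proof -
  interpret P: prob_space M0 by (rule M0_prob)
  let ?A = "{0<..\<delta>} \<times> {..\<delta>}"
  have As: "?A \<in> sets M0" by (rule pair_measureI) auto
  have "measure M0 ?A = measure UU {0<..\<delta>} * measure D {..\<delta>}" by (rule rect) auto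
  also have "\<dots> = \<delta> * cdf D \<delta>"
  proof -
    have "measure UU {0<..\<delta>} = \<delta> - 0" using d by (intro UU_Ioc) auto
    then show ?thesis by (simp only: cdf_def) simp
  qed
  finally have mA: "measure M0 ?A > 0" using d Dpos by simp
  have bnd: "hC (delay_copula_measure D) (gg p) \<le> 3 * \<delta>" if p: "p \<in> ?A" for p
  proof -
    obtain x d' where pe: "p = (x, d')" by (cases p)
    have x: "0 < x" "x \<le> \<delta>" "d' \<le> \<delta>" using p pe by auto
    let ?S1 = "{..x} \<times> (UNIV :: real set)" and ?S2 = "{..x + d'} \<times> (UNIV :: real set)"
      and ?S3 = "(UNIV :: real set) \<times> {..0::real}"
    have sub: "{q. disc (gg p) (gg q)} \<subseteq> ?S1 \<union> ?S2 \<union> ?S3"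
    proof
      fix q assume "q \<in> {q. disc (gg p) (gg q)}"
      then have "fst (gg q) < fst (gg p) \<or> snd (gg q) < snd (gg p)" by (auto simp: disc_def)
      then have "delay_F1 D (fst q) < delay_F1 D x \<or> delay_F2 D (fst q + snd q) < delay_F2 D (x + d')"
        by (simp add: gg_def pe)
      then have "fst q < x \<or> fst q + snd q < x + d'"
        using F1_mono F2_mono by (meson monoD not_le)
      then show "q \<in> ?S1 \<union> ?S2 \<union> ?S3" by (cases q) auto
    qed
    have s123: "?S1 \<in> sets M0" "?S2 \<in> sets M0" "?S3 \<in> sets M0" by (auto intro!: pair_measureI)
    have "hC (delay_copula_measure D) (gg p) \<le> measure M0 (?S1 \<union> ?S2 \<union> ?S3)"
      unfolding hg using sub s123 by (intro P.finite_measure_mono) auto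
    also have "\<dots> \<le> measure M0 ?S1 + measure M0 ?S2 + measure M0 ?S3"
    proof -
      have u1: "measure M0 (?S1 \<union> ?S2 \<union> ?S3) \<le> measure M0 (?S1 \<union> ?S2) + measure M0 ?S3"
        using s123 by (intro measure_subadditive) (auto simp: P.emeasure_finite)
      have u2: "measure M0 (?S1 \<union> ?S2) \<le> measure M0 ?S1 + measure M0 ?S2"
        using s123 by (intro measure_subadditive) (auto simp: P.emeasure_finite)
      show ?thesis using u1 u2 by linarith
    qed
    also have "\<dots> = measure UU {..x} + measure UU {..x + d'} + cdf D 0"
      by (simp add: rect1 rect2 cdf_def)
    also have "\<dots> \<le> \<delta> + 2 * \<delta> + 0"
      using x D0 by (intro add_mono) (auto simp: UU_Iic)
    finally show ?thesis by simp
  qed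
  show ?thesis using As mA bnd by blast
qed

end

context dsetup2
begin

lemma exists_b: "\<exists>b. 0 < b \<and> b \<le> 1/4 \<and> measure D {b<..} > 0"
proof (rule ccontr)
  assume nt: "\<not> ?thesis"
  have z: "measure D {b<..} = 0" if "0 < b" "b \<le> 1/4" for b
  proof -
    have "\<not> (0 < measure D {b<..})" using nt that by auto
    then show ?thesis using measure_nonneg[of D "{b<..}"] by linarith
  qed
  have one: "cdf D b = 1" if "0 < b" "b \<le> 1/4" for b
  proof -
    have "measure D (space D - {..b}) = 1 - measure D {..b}" by (rule prob_compl) simp
    moreover have "space D - {..b} = {b<..}" by auto
    ultimately show ?thesis using z[OF that] by (simp add: cdf_def)
  qed
  have ev: "eventually (\<lambda>x. cdf D x = 1) (at_right (0::real))"
  proof -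
    have "eventually (\<lambda>x. x \<in> {0<..<1/4}) (at_right (0::real))" by (rule eventually_at_right_real) simp
    then show ?thesis by (rule eventually_mono) (auto intro: one)
  qed
  have l1: "(cdf D \<longlongrightarrow> 1) (at_right 0)"
    using tendsto_eventually[OF ev] by simp
  have l2: "(cdf D \<longlongrightarrow> cdf D 0) (at_right 0)"
    using cdf_is_right_cont[of 0] by (simp add: continuous_within)
  have "cdf D 0 = 1" using tendsto_unique[OF trivial_limit_at_right_real l2 l1] .
  then show False using D0 by simp
qed

lemma F2_strict:
  assumes b: "0 < b" "b \<le> 1/4" and x: "0 \<le> x" "x \<le> 1/4"
  shows "delay_F2 D (x + b/2) < delay_F2 D (x + b)"
proof -
  interpret P: prob_space M0 by (rule M0_prob)
  let ?a = "b/4"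
  let ?L = "{p. fst p + snd p \<le> x + b}" and ?K = "{p. fst p + snd p \<le> x + b/2}"
  let ?R = "{x + b/2<..x + 3*b/4} \<times> {0<..?a}"
  have Ls: "?L \<in> sets M0"
  proof -
    have "{p \<in> space M0. fst p + snd p \<le> x + b} \<in> sets M0" by measurable
    then show ?thesis by simp
  qed
  have Ks: "?K \<in> sets M0"
  proof -
    have "{p \<in> space M0. fst p + snd p \<le> x + b/2} \<in> sets M0" by measurable
    then show ?thesis by simp
  qed
  have Rs: "?R \<in> sets M0" by (rule pair_measureI) auto
  have sub: "?R \<subseteq> ?L - ?K" by auto
  have "measure M0 ?R = measure UU {x + b/2<..x + 3*b/4} * measure D {0<..?a}" by (rule rect) auto
  also have "measure UU {x + b/2<..x + 3*b/4} = (x + 3*b/4) - (x + b/2)"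
    using b x by (intro UU_Ioc) auto
  also have "measure D {0<..?a} = cdf D ?a - cdf D 0"
    using b by (intro cdf_diff_eq[symmetric]) auto
  finally have mR: "measure M0 ?R = (b/4) * cdf D ?a" using D0 by simp
  have "0 < (b/4) * cdf D ?a" using b Dpos by simp
  also have "(b/4) * cdf D ?a \<le> measure M0 (?L - ?K)"
    unfolding mR[symmetric] using sub Ls Ks by (intro P.finite_measure_mono) auto
  also have "\<dots> = measure M0 ?L - measure M0 ?K"
    using Ls Ks b by (intro P.finite_measure_Diff) auto
  finally show ?thesis unfolding F2_eq by simp
qed

lemma lemB:
  "\<exists>B0 \<in> sets M0. measure M0 B0 > 0 \<and> (\<forall>p\<in>B0. hC (delay_copula_measure D) (gg p) > 0)"
proof -
  interpret P: prob_space M0 by (rule M0_prob)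
  obtain b where b: "0 < b" "b \<le> 1/4" "measure D {b<..} > 0" using exists_b by blast
  let ?a = "b/4"
  let ?B = "{0<..1/4::real} \<times> {b<..}"
  have Bs: "?B \<in> sets M0" by (rule pair_measureI) auto
  have "measure M0 ?B = measure UU {0<..1/4::real} * measure D {b<..}" by (rule rect) auto
  also have "measure UU {0<..1/4::real} = 1/4 - 0" by (intro UU_Ioc) auto
  finally have mB: "measure M0 ?B > 0" using b by simp
  have pos: "hC (delay_copula_measure D) (gg p) > 0" if p: "p \<in> ?B" for p
  proof -
    obtain x d where pe: "p = (x, d)" by (cases p)
    have x: "0 < x" "x \<le> 1/4" "b < d" using p pe by auto
    let ?R = "{x<..x + b/4} \<times> {..?a}"
    have Rs: "?R \<in> sets M0" by (rule pair_measureI) auto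
    have "measure M0 ?R = measure UU {x<..x + b/4} * measure D {..?a}" by (rule rect) auto
    also have "measure UU {x<..x + b/4} = (x + b/4) - x" using x b by (intro UU_Ioc) auto
    finally have mR: "measure M0 ?R = (b/4) * cdf D ?a" by (simp add: cdf_def)
    have mRpos: "measure M0 ?R > 0" unfolding mR using b Dpos by simp
    have sub: "?R \<subseteq> {q. disc (gg p) (gg q)}"
    proof
      fix q assume q: "q \<in> ?R"
      obtain x' d' where qe: "q = (x', d')" by (cases q)
      have q': "x < x'" "x' \<le> x + b/4" "d' \<le> b/4" using q qe by auto
      have f1: "delay_F1 D x < delay_F1 D x'"
        using x q' b by (simp add: F1_val)
      have "delay_F2 D (x' + d') \<le> delay_F2 D (x + b/2)"
        using q' by (intro monoD[OF F2_mono]) simp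
      also have "\<dots> < delay_F2 D (x + b)" using F2_strict[of b x] b x by simp
      also have "\<dots> \<le> delay_F2 D (x + d)" using x by (intro monoD[OF F2_mono]) simp
      finally have f2: "delay_F2 D (x' + d') < delay_F2 D (x + d)" .
      show "q \<in> {q. disc (gg p) (gg q)}"
        using f1 f2 by (simp add: disc_def gg_def pe qe)
    qed
    have "0 < measure M0 ?R" by (rule mRpos)
    also have "\<dots> \<le> measure M0 {q. disc (gg p) (gg q)}"
      using sub disc_set_M0 by (intro P.finite_measure_mono)
    finally show ?thesis unfolding hg .
  qed
  show ?thesis using Bs mB pos by blast
qed

end

context dsetup2
begin

lemma main_ne:
  "copula_perm_prob2 (delay_copula_measure D) 2 (Transposition.transpose 0 1) 2 (Transposition.transpose 0 1)
    - (copula_perm_prob (delay_copula_measure D) 2 (Transposition.transpose 0 1))\<^sup>2 \<noteq> 0"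
proof
  define C where "C = delay_copula_measure D"
  have Cp: "prob_space C" unfolding C_def by (rule C_prob)
  have Cs: "sets C = sets borel" unfolding C_def by (rule sets_C)
  interpret C: prob_space C by (rule Cp)
  let ?h = "hC C"
  define c where "c = (\<integral>a. ?h a \<partial>C)"
  have hm: "?h \<in> borel_measurable C" by (rule h_meas[OF Cp Cs])
  have hb: "0 \<le> ?h a" "?h a \<le> 1" for a using h_bounds[OF Cp Cs] by auto
  have i1: "integrable C ?h"
    by (rule C.integrable_const_bound[of _ 1]) (use hb hm in auto)
  have i2: "integrable C (\<lambda>a. (?h a)\<^sup>2)"
  proof (rule C.integrable_const_bound[of _ 1])
    show "AE x in C. norm ((?h x)\<^sup>2) \<le> 1" using hb by (auto simp: abs_le_iff power_le_one)
  qed (use hm in measurable)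
  assume "copula_perm_prob2 (delay_copula_measure D) 2 (Transposition.transpose 0 1) 2 (Transposition.transpose 0 1)
    - (copula_perm_prob (delay_copula_measure D) 2 (Transposition.transpose 0 1))\<^sup>2 = 0"
  then have "(\<integral>a. (?h a)\<^sup>2 \<partial>C) - c\<^sup>2 = 0"
    unfolding C_def[symmetric] P1[OF Cp Cs] P2[OF Cp Cs] c_def .
  then have v0: "(\<integral>a. (?h a - c)\<^sup>2 \<partial>C) = 0"
    using C.variance_eq[OF i1 i2] unfolding c_def by simp
  have cb: "\<bar>c\<bar> \<le> 1"
  proof -
    have "0 \<le> c" unfolding c_def using hb by (intro integral_nonneg_AE) auto
    moreover have "c \<le> 1" unfolding c_def
      using C.integral_le_const[of ?h 1] hb i1 by auto
    ultimately show ?thesis by simp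
  qed
  have i3: "integrable C (\<lambda>a. (?h a - c)\<^sup>2)"
  proof (rule C.integrable_const_bound[of _ 4])
    show "AE x in C. norm ((?h x - c)\<^sup>2) \<le> 4"
    proof (rule AE_I2)
      fix x
      have "\<bar>?h x - c\<bar> \<le> 2" using hb[of x] cb by auto
      then have "\<bar>?h x - c\<bar>\<^sup>2 \<le> 2\<^sup>2" by (intro power_mono) auto
      then show "norm ((?h x - c)\<^sup>2) \<le> 4" by simp
    qed
  qed (use hm in measurable)
  have "AE x in C. (?h x - c)\<^sup>2 = 0"
    using integral_nonneg_eq_0_iff_AE[OF i3] v0 by auto
  then have AEC: "AE x in C. ?h x = c" by auto
  have X: "C = distr M0 borel gg" unfolding C_def by (rule C_eq)
  have "AE x in distr M0 borel gg. ?h x = c" by (subst X[symmetric]) (rule AEC)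
  then have AEM: "AE p in M0. ?h (gg p) = c" by (rule AE_distrD[OF gg_meas])
  obtain B0 where B0: "B0 \<in> sets M0" "measure M0 B0 > 0" "\<forall>p\<in>B0. ?h (gg p) > 0"
    using lemB unfolding C_def by blast
  obtain p where "p \<in> B0" "?h (gg p) = c" using AE_pos_witness[OF AEM B0(1,2)] by blast
  then have c0: "c > 0" using B0(3) by auto
  have c1: "c \<le> 1" using cb by simp
  obtain A0 where A0: "A0 \<in> sets M0" "measure M0 A0 > 0" "\<forall>p\<in>A0. ?h (gg p) \<le> 3 * (c/4)"
    using lemA[of "c/4"] c0 c1 unfolding C_def by auto
  obtain q where "q \<in> A0" "?h (gg q) = c" using AE_pos_witness[OF AEM A0(1,2)] by blast
  then have "c \<le> 3 * (c/4)" using A0(3) by auto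
  then show False using c0 by simp
qed

end

theorem proposition3p3:
  fixes D :: "real measure"
  assumes "real_distribution D"
    and "cdf D 0 = 0"
    and "\<forall>\<epsilon>>0. cdf D \<epsilon> > 0"
  shows "\<exists>k \<sigma>. \<sigma> permutes {..<k} \<and>
    copula_perm_prob2 (delay_copula_measure D) k \<sigma> k \<sigma>
      - (copula_perm_prob (delay_copula_measure D) k \<sigma>)\<^sup>2 \<noteq> 0"
proof -
  interpret real_distribution D by (rule assms(1))
  interpret dsetup2 D by unfold_locales (use assms(2,3) in auto)
  show ?thesis using main_ne sw_permutes by blast
qed

end
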